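(* Let $\kappa$ be an infinite cardinal and let $S$ be the lattice of all finite subsets of $\kappa$ (ordered by inclusion). Then $\mathrm{ch}\text{-}\mathrm{Id}(S)$ is a lattice, and if $\kappa=\lambda^{\aleph_0}$ for some cardinal $\lambda$, then there exists a surjective upper semilattice homomorphism from $S$ onto $\mathrm{ch}\text{-}\mathrm{Id}(S)$ (regarded as an upper semilattice under its lattice join).
   Context: For a poset $P$ and $X\subseteq P$, write $P\downarrow X=\{y\in P\mid\exists x\in X,\ y\le x\}$. An ideal of $P$ is a (possibly empty) upward directed downset of $P$. $\mathrm{ch}\text{-}\mathrm{Id}(P)$ denotes the poset, ordered by inclusion, of all ideals of $P$ of the form $P\downarrow C$ with $C\subseteq P$ a chain (possibly empty). *)

theory Defs
  imports "HOL-Library.Equipollence" "HOL-Library.FuncSet"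
begin

definition down :: "'b set \<Rightarrow> ('b \<Rightarrow> 'b \<Rightarrow> bool) \<Rightarrow> 'b set \<Rightarrow> 'b set" where
  "down P le X = {y \<in> P. \<exists>x\<in>X. le y x}"

definition is_downset :: "'b set \<Rightarrow> ('b \<Rightarrow> 'b \<Rightarrow> bool) \<Rightarrow> 'b set \<Rightarrow> bool" where
  "is_downset P le I \<longleftrightarrow> I \<subseteq> P \<and> (\<forall>x\<in>I. \<forall>y\<in>P. le y x \<longrightarrow> y \<in> I)"

definition is_ideal :: "'b set \<Rightarrow> ('b \<Rightarrow> 'b \<Rightarrow> bool) \<Rightarrow> 'b set \<Rightarrow> bool" where
  "is_ideal P le I \<longleftrightarrow> is_downset P le I \<and>
     (\<forall>x\<in>I. \<forall>y\<in>I. \<exists>z\<in>I. le x z \<and> le y z)"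

definition is_chain :: "('b \<Rightarrow> 'b \<Rightarrow> bool) \<Rightarrow> 'b set \<Rightarrow> bool" where
  "is_chain le C \<longleftrightarrow> (\<forall>x\<in>C. \<forall>y\<in>C. le x y \<or> le y x)"

text \<open>ch-Id(P): ideals of P of the form P\<down>C with C a (possibly empty) chain of P.\<close>
definition chId :: "'b set \<Rightarrow> ('b \<Rightarrow> 'b \<Rightarrow> bool) \<Rightarrow> 'b set set" where
  "chId P le = {I. is_ideal P le I \<and> (\<exists>C. C \<subseteq> P \<and> is_chain le C \<and> I = down P le C)}"

definition is_lub :: "('b \<Rightarrow> 'b \<Rightarrow> bool) \<Rightarrow> 'b set \<Rightarrow> 'b set \<Rightarrow> 'b \<Rightarrow> bool" where
  "is_lub le P X z \<longleftrightarrow> z \<in> P \<and> (\<forall>x\<in>X. le x z) \<and> (\<forall>w\<in>P. (\<forall>x\<in>X. le x w) \<longrightarrow> le z w)"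

definition is_glb :: "('b \<Rightarrow> 'b \<Rightarrow> bool) \<Rightarrow> 'b set \<Rightarrow> 'b set \<Rightarrow> 'b \<Rightarrow> bool" where
  "is_glb le P X z \<longleftrightarrow> z \<in> P \<and> (\<forall>x\<in>X. le z x) \<and> (\<forall>w\<in>P. (\<forall>x\<in>X. le w x) \<longrightarrow> le w z)"

definition lattice_on :: "'b set \<Rightarrow> ('b \<Rightarrow> 'b \<Rightarrow> bool) \<Rightarrow> bool" where
  "lattice_on P le \<longleftrightarrow> (\<forall>x\<in>P. \<forall>y\<in>P. (\<exists>z. is_lub le P {x, y} z) \<and> (\<exists>z. is_glb le P {x, y} z))"

end

theory Submission imports Defs "HOL-Library.Countable_Set" begin

definition PF :: "'a set \<Rightarrow> 'a set set" where "PF A = {B. B \<subseteq> A \<and> finite B}"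

lemma Union_PF: "\<Union>(PF A) = A"
  unfolding PF_def by auto

lemma PF_mono_iff: "PF A \<subseteq> PF B \<longleftrightarrow> A \<subseteq> B"
  unfolding PF_def by auto

lemma PF_ne: "PF A \<noteq> {}"
  unfolding PF_def by auto

lemma chain_bound:
  assumes "is_chain (\<subseteq>) C" "C \<noteq> {}" "finite B" "B \<subseteq> \<Union>C"
  shows "\<exists>c\<in>C. B \<subseteq> c"
  using assms(3,4)
proof (induction B rule: finite_induct)
  case empty then show ?case using assms(2) by auto
next
  case (insert b B)
  then obtain c where c: "c \<in> C" "B \<subseteq> c" by auto
  from insert obtain d where d: "d \<in> C" "b \<in> d" by auto
  from assms(1) c d have "c \<subseteq> d \<or> d \<subseteq> c" unfolding is_chain_def by auto
  then show ?case using c d by blast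
qed

lemma range_bound:
  assumes "finite B" "B \<subseteq> range e"
  shows "\<exists>n. B \<subseteq> e ` {..<(n::nat)}"
  using assms
proof (induction B rule: finite_induct)
  case empty then show ?case by auto
next
  case (insert b B)
  then obtain n where n: "B \<subseteq> e ` {..<n}" by auto
  from insert obtain m where m: "b = e m" by auto
  have "insert b B \<subseteq> e ` {..<max n (Suc m)}" using n m by auto
  then show ?case by blast
qed

lemma chain_countable:
  assumes "\<forall>c\<in>C. finite c" "is_chain (\<subseteq>) C"
  shows "countable C"
proof -
  have "inj_on card C"
  proof (rule inj_onI)
    fix x y assume "x \<in> C" "y \<in> C" "card x = card y"
    with assms have "x \<subseteq> y \<or> y \<subseteq> x" "finite x" "finite y" unfolding is_chain_def by auto
    then show "x = y" using \<open>card x = card y\<close> card_subset_eq by metis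
  qed
  then show ?thesis using countable_image_inj_on[of card C] by simp
qed

lemma PF_ideal: "A \<subseteq> K \<Longrightarrow> is_ideal (PF K) (\<subseteq>) (PF A)"
  unfolding is_ideal_def is_downset_def
proof (intro conjI ballI impI)
  assume "A \<subseteq> K"
  then show "PF A \<subseteq> PF K" by (simp add: PF_mono_iff)
  fix x y assume "x \<in> PF A" "y \<in> PF K" "y \<subseteq> x"
  then show "y \<in> PF A" unfolding PF_def by blast
next
  fix x y assume "x \<in> PF A" "y \<in> PF A"
  then show "\<exists>z\<in>PF A. x \<subseteq> z \<and> y \<subseteq> z"
    by (intro bexI[of _ "x \<union> y"]) (auto simp: PF_def)
qed

lemma chId_char:
  "I \<in> chId (PF K) (\<subseteq>) \<longleftrightarrow> I = {} \<or> (\<exists>A. A \<subseteq> K \<and> countable A \<and> I = PF A)"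
proof
  assume "I \<in> chId (PF K) (\<subseteq>)"
  then obtain C where C: "C \<subseteq> PF K" "is_chain (\<subseteq>) C" "I = down (PF K) (\<subseteq>) C"
    unfolding chId_def by auto
  show "I = {} \<or> (\<exists>A. A \<subseteq> K \<and> countable A \<and> I = PF A)"
  proof (cases "C = {}")
    case True then show ?thesis using C by (simp add: down_def)
  next
    case False
    have fin: "\<forall>c\<in>C. finite c" using C(1) by (auto simp: PF_def)
    have "countable (\<Union>C)"
      using chain_countable[OF fin C(2)] fin
      using countable_UN[of C id] by (simp add: countable_finite)
    moreover have "\<Union>C \<subseteq> K" using C(1) by (auto simp: PF_def)
    moreover have "I = PF (\<Union>C)"
    proof
      show "I \<subseteq> PF (\<Union>C)" using C(3) by (auto simp: down_def PF_def)
      show "PF (\<Union>C) \<subseteq> I"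
      proof
        fix B assume "B \<in> PF (\<Union>C)"
        then have "finite B" "B \<subseteq> \<Union>C" by (auto simp: PF_def)
        with chain_bound[OF C(2) False] obtain c where "c \<in> C" "B \<subseteq> c" by blast
        then show "B \<in> I" using C \<open>\<Union>C \<subseteq> K\<close> \<open>finite B\<close> by (auto simp: down_def PF_def)
      qed
    qed
    ultimately show ?thesis by blast
  qed
next
  assume "I = {} \<or> (\<exists>A. A \<subseteq> K \<and> countable A \<and> I = PF A)"
  then show "I \<in> chId (PF K) (\<subseteq>)"
  proof
    assume "I = {}"
    then show ?thesis unfolding chId_def
      by (auto simp: is_ideal_def is_downset_def is_chain_def down_def intro!: exI[of _ "{}"])
  next
    assume "\<exists>A. A \<subseteq> K \<and> countable A \<and> I = PF A"
    then obtain A where A: "A \<subseteq> K" "countable A" "I = PF A" by blast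
    show ?thesis
    proof (cases "A = {}")
      case True
      have "I = down (PF K) (\<subseteq>) {{}}" using A True by (auto simp: down_def PF_def)
      then show ?thesis using PF_ideal[OF A(1)] A unfolding chId_def
        by (auto simp: is_chain_def PF_def intro!: exI[of _ "{{}}"])
    next
      case False
      define e where "e = from_nat_into A"
      have re: "range e = A" using False A(2) by (simp add: e_def range_from_nat_into)
      define C where "C = range (\<lambda>n. e ` {..<n})"
      have "C \<subseteq> PF K" using re A(1) by (auto simp: C_def PF_def)
      moreover have "is_chain (\<subseteq>) C"
        unfolding is_chain_def C_def
      proof (intro ballI)
        fix x y assume "x \<in> range (\<lambda>n. e ` {..<n})" "y \<in> range (\<lambda>n. e ` {..<n})"
        then obtain n m where "x = e ` {..<n}" "y = e ` {..<m}" by auto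
        then show "x \<subseteq> y \<or> y \<subseteq> x"
          by (cases "n \<le> m") (auto intro: image_mono)
      qed
      moreover have "I = down (PF K) (\<subseteq>) C"
      proof
        show "I \<subseteq> down (PF K) (\<subseteq>) C"
        proof
          fix B assume "B \<in> I"
          then have "finite B" "B \<subseteq> range e" "B \<subseteq> K" using A re by (auto simp: PF_def)
          then obtain n where "B \<subseteq> e ` {..<n}" using range_bound by blast
          then show "B \<in> down (PF K) (\<subseteq>) C"
            using \<open>finite B\<close> \<open>B \<subseteq> K\<close> by (auto simp: down_def PF_def C_def)
        qed
        show "down (PF K) (\<subseteq>) C \<subseteq> I"
          using A re by (auto simp: down_def PF_def C_def)
      qed
      moreover have "is_ideal (PF K) (\<subseteq>) I" using PF_ideal[OF A(1)] A(3) by simp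
      ultimately show ?thesis unfolding chId_def by blast
    qed
  qed
qed

lemma PF_Int: "PF A \<inter> PF B = PF (A \<inter> B)" unfolding PF_def by auto

lemma chId_glb:
  assumes "X \<in> chId (PF K) (\<subseteq>)" "Y \<in> chId (PF K) (\<subseteq>)"
  shows "is_glb (\<subseteq>) (chId (PF K) (\<subseteq>)) {X, Y} (X \<inter> Y)"
proof -
  have "X \<inter> Y \<in> chId (PF K) (\<subseteq>)"
  proof (cases "X = {} \<or> Y = {}")
    case True then show ?thesis using chId_char[of "{}" K] by auto
  next
    case False
    then obtain A B where "A \<subseteq> K" "countable A" "X = PF A" "B \<subseteq> K" "countable B" "Y = PF B"
      using assms chId_char by metis
    then have "X \<inter> Y = PF (A \<inter> B)" "A \<inter> B \<subseteq> K" "countable (A \<inter> B)"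
      by (simp_all add: PF_Int) auto
    then show ?thesis unfolding chId_char[of "X \<inter> Y"] by blast
  qed
  then show ?thesis unfolding is_glb_def by auto
qed

definition jn :: "'a set set \<Rightarrow> 'a set set \<Rightarrow> 'a set set" where
  "jn X Y = (if X = {} then Y else if Y = {} then X else PF (\<Union>X \<union> \<Union>Y))"

lemma chId_lub:
  assumes "X \<in> chId (PF K) (\<subseteq>)" "Y \<in> chId (PF K) (\<subseteq>)"
  shows "is_lub (\<subseteq>) (chId (PF K) (\<subseteq>)) {X, Y} (jn X Y)"
proof (cases "X = {} \<or> Y = {}")
  case True
  have m: "jn X Y \<in> chId (PF K) (\<subseteq>)" using assms True unfolding jn_def by auto
  have ub: "X \<subseteq> jn X Y" "Y \<subseteq> jn X Y" using True unfolding jn_def by auto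
  have le: "jn X Y \<subseteq> W" if "X \<subseteq> W" "Y \<subseteq> W" for W
    using that True unfolding jn_def by auto
  show ?thesis unfolding is_lub_def
  proof (intro conjI m ballI impI)
    fix x assume "x \<in> {X, Y}" then show "x \<subseteq> jn X Y" using ub by blast
  next
    fix w assume "w \<in> chId (PF K) (\<subseteq>)" "\<forall>x\<in>{X, Y}. x \<subseteq> w"
    then show "jn X Y \<subseteq> w" using le by simp
  qed
next
  case False
  then have ne: "X \<noteq> {}" "Y \<noteq> {}" by auto
  obtain A where A: "A \<subseteq> K" "countable A" "X = PF A"
    using chId_char[THEN iffD1, OF assms(1)] ne(1) by blast
  obtain B where B: "B \<subseteq> K" "countable B" "Y = PF B"
    using chId_char[THEN iffD1, OF assms(2)] ne(2) by blast
  have j: "jn X Y = PF (A \<union> B)" using ne A(3) B(3) by (simp add: jn_def Union_PF)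
  have m: "PF (A \<union> B) \<in> chId (PF K) (\<subseteq>)"
    by (rule chId_char[THEN iffD2], rule disjI2, rule exI[of _ "A \<union> B"]) (use A B in simp)
  have ub: "X \<subseteq> PF (A \<union> B)" "Y \<subseteq> PF (A \<union> B)" using A(3) B(3) by (simp_all add: PF_mono_iff)
  have le: "PF (A \<union> B) \<subseteq> W" if W: "W \<in> chId (PF K) (\<subseteq>)" "X \<subseteq> W" "Y \<subseteq> W" for W
  proof -
    have "{} \<in> X" using A(3) by (simp add: PF_def)
    then have "W \<noteq> {}" using W(2) by blast
    then obtain D where "W = PF D" using chId_char[THEN iffD1, OF W(1)] by blast
    then show ?thesis using W(2,3) A(3) B(3) by (simp add: PF_mono_iff)
  qed
  show ?thesis unfolding is_lub_def j
  proof (intro conjI m ballI impI)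
    fix x assume "x \<in> {X, Y}" then show "x \<subseteq> PF (A \<union> B)" using ub by blast
  next
    fix w assume "w \<in> chId (PF K) (\<subseteq>)" "\<forall>x\<in>{X, Y}. x \<subseteq> w"
    then show "PF (A \<union> B) \<subseteq> w" using le by simp
  qed
qed

lemma chId_lattice: "lattice_on (chId (PF K) (\<subseteq>)) (\<subseteq>)"
  unfolding lattice_on_def
proof (intro ballI conjI)
  fix x y assume "x \<in> chId (PF K) (\<subseteq>)" "y \<in> chId (PF K) (\<subseteq>)"
  note xy = this
  show "\<exists>z. is_lub (\<subseteq>) (chId (PF K) (\<subseteq>)) {x, y} z"
    by (rule exI, rule chId_lub[OF xy])
  show "\<exists>z. is_glb (\<subseteq>) (chId (PF K) (\<subseteq>)) {x, y} z"
    by (rule exI, rule chId_glb[OF xy])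
qed

lemma surj_countable:
  assumes "infinite K" "bij_betw h K ((UNIV :: nat set) \<rightarrow>\<^sub>E L)"
  shows "\<exists>g. (\<forall>k\<in>K. g k \<subseteq> K \<and> countable (g k)) \<and> (\<forall>A. A \<subseteq> K \<and> countable A \<longrightarrow> (\<exists>k\<in>K. g k = A))"
proof -
  define hi where "hi = inv_into K h"
  have img: "h ` K = UNIV \<rightarrow>\<^sub>E L" using assms(2) by (simp add: bij_betw_def)
  have inj: "inj_on h K" using assms(2) by (simp add: bij_betw_def)
  have hi: "hi q \<in> K \<and> h (hi q) = q" if "q \<in> UNIV \<rightarrow>\<^sub>E L" for q
    using that img unfolding hi_def by (metis f_inv_into_f inv_into_into)
  have hh: "hi (h k) = k" if "k \<in> K" for k
    using that inj unfolding hi_def by (simp add: inv_into_f_f)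
  have hk: "h k i \<in> L" if "k \<in> K" for k i
    using that img by (auto simp: PiE_iff)
  define \<phi> where "\<phi> k n = hi (\<lambda>m. h k (prod_encode (n,m)))" for k n
  have \<phi>K: "\<phi> k n \<in> K" if "k \<in> K" for k n
    unfolding \<phi>_def by (rule hi[THEN conjunct1]) (simp add: PiE_iff hk[OF that])
  have \<phi>surj: "\<exists>k\<in>K. \<forall>n. \<phi> k n = s n" if s: "\<And>n. s n \<in> K" for s
  proof -
    define q where "q i = h (s (fst (prod_decode i))) (snd (prod_decode i))" for i
    have q: "q \<in> UNIV \<rightarrow>\<^sub>E L" by (simp add: PiE_iff q_def hk[OF s])
    define k where "k = hi q"
    have k: "k \<in> K" "h k = q" using hi[OF q] k_def by auto
    have "\<phi> k n = s n" for n
    proof -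
      have "(\<lambda>m. h k (prod_encode (n,m))) = h (s n)" by (rule ext) (simp add: k q_def)
      then show ?thesis unfolding \<phi>_def using hh[OF s] by simp
    qed
    then show ?thesis using k by blast
  qed
  obtain k0 where k0: "k0 \<in> K" using infinite_imp_nonempty[OF assms(1)] by blast
  have "infinite (K - {k0})" using assms(1) by simp
  then obtain k1 where "k1 \<in> K - {k0}" using infinite_imp_nonempty by blast
  then have k1: "k1 \<in> K" "k1 \<noteq> k0" by auto
  define g where "g k = (if \<phi> k 0 = k0 then {} else range (\<lambda>n. \<phi> k (Suc n)))" for k
  have G1: "\<forall>k\<in>K. g k \<subseteq> K \<and> countable (g k)"
    unfolding g_def using \<phi>K by auto
  have G2: "\<exists>k\<in>K. g k = A" if "A \<subseteq> K" "countable A" for A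
  proof (cases "A = {}")
    case True
    obtain k where "k \<in> K" "\<forall>n. \<phi> k n = k0" using \<phi>surj[of "\<lambda>_. k0"] k0 by blast
    then show ?thesis using True unfolding g_def by auto
  next
    case False
    define t where "t = from_nat_into A"
    have rt: "range t = A" using False that(2) by (simp add: t_def range_from_nat_into)
    have "case_nat k1 t n \<in> K" for n using rt that(1) k1 by (cases n) auto
    then obtain k where k: "k \<in> K" "\<forall>n. \<phi> k n = case_nat k1 t n" using \<phi>surj[of "case_nat k1 t"] by blast
    then have "g k = range t" using k1 unfolding g_def by simp
    then show ?thesis using k rt by blast
  qed
  show ?thesis
    by (rule exI[of _ g], rule conjI, rule G1, intro allI impI, erule conjE, rule G2)
qed

theorem lemma3p3:
  fixes K :: "'a set"
  assumes "infinite K"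
  defines "S \<equiv> {A. A \<subseteq> K \<and> finite A}"
  shows "lattice_on (chId S (\<subseteq>)) (\<subseteq>) \<and>
    ((\<exists>L :: 'a set. K \<approx> ((UNIV :: nat set) \<rightarrow>\<^sub>E L)) \<longrightarrow>
      (\<exists>f. f \<in> S \<rightarrow> chId S (\<subseteq>) \<and> f ` S = chId S (\<subseteq>) \<and>
         (\<forall>a\<in>S. \<forall>b\<in>S. is_lub (\<subseteq>) (chId S (\<subseteq>)) {f a, f b} (f (a \<union> b)))))"
proof -
  have SPF: "S = PF K" by (simp add: S_def PF_def)
  show ?thesis unfolding SPF
  proof (intro conjI impI)
    show "lattice_on (chId (PF K) (\<subseteq>)) (\<subseteq>)" by (rule chId_lattice)
    assume "\<exists>L :: 'a set. K \<approx> ((UNIV :: nat set) \<rightarrow>\<^sub>E L)"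
    then obtain L :: "'a set" and h where "bij_betw h K ((UNIV :: nat set) \<rightarrow>\<^sub>E L)"
      unfolding eqpoll_def by blast
    from surj_countable[OF assms(1) this] obtain g where
      g1: "\<forall>k\<in>K. g k \<subseteq> K \<and> countable (g k)" and
      g2: "\<forall>A. A \<subseteq> K \<and> countable A \<longrightarrow> (\<exists>k\<in>K. g k = A)" by blast
    define f where "f a = (if a = {} then {} else PF (\<Union>(g ` a)))" for a
    have fin: "f a \<in> chId (PF K) (\<subseteq>)" if "a \<in> PF K" for a
    proof (cases "a = {}")
      case True then show ?thesis using chId_char[of "{}" K] by (simp add: f_def)
    next
      case False
      have "a \<subseteq> K" "finite a" using that by (auto simp: PF_def)
      then have "\<Union>(g ` a) \<subseteq> K" using g1 by blast
      moreover have "countable (\<Union>(g ` a))"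
        by (rule countable_UN) (use \<open>finite a\<close> \<open>a \<subseteq> K\<close> g1 in \<open>auto intro: countable_finite\<close>)
      ultimately have "\<Union>(g ` a) \<subseteq> K \<and> countable (\<Union>(g ` a)) \<and> f a = PF (\<Union>(g ` a))"
        using False by (simp add: f_def)
      then have "\<exists>A. A \<subseteq> K \<and> countable A \<and> f a = PF A" by blast
      then show ?thesis by (rule chId_char[THEN iffD2, OF disjI2])
    qed
    have fsurj: "chId (PF K) (\<subseteq>) \<subseteq> f ` PF K"
    proof
      fix I assume "I \<in> chId (PF K) (\<subseteq>)"
      then have "I = {} \<or> (\<exists>A. A \<subseteq> K \<and> countable A \<and> I = PF A)" by (rule chId_char[THEN iffD1])
      then show "I \<in> f ` PF K"
      proof
        assume "I = {}"
        moreover have "{} \<in> PF K" by (simp add: PF_def)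
        ultimately show ?thesis by (force simp: f_def)
      next
        assume "\<exists>A. A \<subseteq> K \<and> countable A \<and> I = PF A"
        then obtain A where A: "A \<subseteq> K" "countable A" "I = PF A" by blast
        then obtain k where k: "k \<in> K" "g k = A" using g2 by blast
        have "f {k} = I" using k A by (simp add: f_def)
        moreover have "{k} \<in> PF K" using k by (simp add: PF_def)
        ultimately show ?thesis by blast
      qed
    qed
    have fj: "f (a \<union> b) = jn (f a) (f b)" for a b
    proof (cases "a = {} \<or> b = {}")
      case True then show ?thesis by (auto simp: f_def jn_def PF_ne)
    next
      case False
      then show ?thesis by (simp add: f_def jn_def PF_ne Union_PF image_Un)
    qed
    show "\<exists>f. f \<in> PF K \<rightarrow> chId (PF K) (\<subseteq>) \<and> f ` PF K = chId (PF K) (\<subseteq>) \<and>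
         (\<forall>a\<in>PF K. \<forall>b\<in>PF K. is_lub (\<subseteq>) (chId (PF K) (\<subseteq>)) {f a, f b} (f (a \<union> b)))"
    proof (intro exI conjI ballI)
      show "f \<in> PF K \<rightarrow> chId (PF K) (\<subseteq>)" using fin by blast
      show "f ` PF K = chId (PF K) (\<subseteq>)" using fin fsurj by blast
      fix a b assume "a \<in> PF K" "b \<in> PF K"
      then show "is_lub (\<subseteq>) (chId (PF K) (\<subseteq>)) {f a, f b} (f (a \<union> b))"
        unfolding fj by (intro chId_lub fin)
    qed
  qed
qed

end
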